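(* Let $\hat{\mathbf Q}=\tilde{\mathbf Q}_{st}+\tilde{\mathbf Q}_{\mathcal I}\varepsilon$ be an $n\times n$ dual quaternion Hermitian matrix and $\epsilon>0$. Then Algorithm 1 applied to $\hat{\mathbf Q}$ with accuracy $\epsilon$ terminates after $T$ iterations, where $T$ is bounded by a fixed positive integer, and the final iterate satisfies $r^{(T)}<\epsilon$. Moreover, if $\mu_1\ge\mu_2\ge\cdots\ge\mu_n$ are the eigenvalues of $\tilde{\mathbf Q}_{st}$ and $d_1\ge d_2\ge\cdots\ge d_n$ are the diagonal entries of $\tilde{\mathbf Q}^{(T)}_{st}$ arranged in nonincreasing order, then $$\max_{1\le i\le n}|\mu_i-d_i|<\sqrt{n(n-1)}\,\epsilon .$$
   Context: Quaternions, dual quaternions $\hat q=q_{st}+q_{\mathcal I}\varepsilon$ ($\varepsilon$ commuting with quaternions, $\varepsilon^2=0$, product $(p_{st}+p_{\mathcal I}\varepsilon)(q_{st}+q_{\mathcal I}\varepsilon)=p_{st}q_{st}+(p_{st}q_{\mathcal I}+p_{\mathcal I}q_{st})\varepsilon$), conjugate transposes, Hermitian and unitary matrices are as usual; a quaternion Hermitian matrix has real eigenvalues and real diagonal. For a dual quaternion matrix $\hat{\mathbf Q}^{(t)}$ write $\hat{\mathbf Q}^{(t)}=\tilde{\mathbf Q}^{(t)}_{st}+\tilde{\mathbf Q}^{(t)}_{\mathcal I}\varepsilon$. Givens matrix: for an $n\times n$ dual quaternion Hermitian $\hat{\mathbf Q}$ and $k<l$ with $\tilde c=(\tilde{\mathbf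 Q}_{st})_{kl}\ne0$, put $a=(\tilde{\mathbf Q}_{st})_{kk}$, $b=(\tilde{\mathbf Q}_{st})_{ll}$, let $\lambda_1,\lambda_2$ be the roots of $(a-x)(b-x)=|\tilde c|^2$, $\rho_i=((a-\lambda_i)^2+|\tilde c|^2)^{1/2}$, $\tilde{\mathbf U}=\begin{bmatrix}-\tilde c/\rho_1&-\tilde c/\rho_2\\ (a-\lambda_1)/\rho_1&(a-\lambda_2)/\rho_2\end{bmatrix}$; with $\tilde{\mathbf B}$ the $\{k,l\}$ principal $2\times2$ submatrix of $\tilde{\mathbf Q}_{\mathcal I}$, write $\tilde{\mathbf U}^\ast\tilde{\mathbf B}\tilde{\mathbf U}=\begin{bmatrix}x&\tilde z\\ \tilde z^\ast&y\end{bmatrix}$ and $\hat{\mathbf V}=\begin{bmatrix}1&\frac{\tilde z}{\lambda_2-\lambda_1}\varepsilon\\ \frac{\tilde z^\ast}{\lambda_1-\lambda_2}\varepsilon&1\end{bmatrix}$. $J_{\hat{\mathbf Q}}(k,l)$ is the $n\times n$ identity with its $\{k,l\}$ rows/columns block replaced by $\tilde{\mathbf U}\hat{\mathbf V}$. Algorithm 1 (accuracy $\epsilon>0$): set $\hat{\mathbf Q}^{(0)}=\hat{\mathbf Q}$. At iteration $t=0,1,2,\dots$ compute $r^{(t)}=\max_{i<j}|(\tilde{\mathbf Q}^{(t)}_{st})_{ij}|$; if $r^{(t)}<\epsilon$ stop; otherwise choose $(k,l)$, $k<l$, attaining this maximum and set $\hat{\mathbf Q}^{(t+1)}=J_{\hat{\mathbf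 Q}^{(t)}}(k,l)^\ast\hat{\mathbf Q}^{(t)}J_{\hat{\mathbf Q}^{(t)}}(k,l)$. *)

theory Defs
  imports Complex_Main "HOL-Library.Multiset"
begin

datatype quat = Quat (qre: real) (qi: real) (qj: real) (qk: real)

lemma quat_eqI: "qre a = qre b \<Longrightarrow> qi a = qi b \<Longrightarrow> qj a = qj b \<Longrightarrow> qk a = qk b \<Longrightarrow> a = b"
  by (cases a; cases b) simp

instantiation quat :: ring_1
begin
definition "0 = Quat 0 0 0 0"
definition "1 = Quat 1 0 0 0"
definition "a + b = Quat (qre a + qre b) (qi a + qi b) (qj a + qj b) (qk a + qk b)"
definition "a - b = Quat (qre a - qre b) (qi a - qi b) (qj a - qj b) (qk a - qk b)"
definition "- a = Quat (- qre a) (- qi a) (- qj a) (- qk a)"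
definition "a * b = Quat
   (qre a * qre b - qi a * qi b - qj a * qj b - qk a * qk b)
   (qre a * qi b + qi a * qre b + qj a * qk b - qk a * qj b)
   (qre a * qj b - qi a * qk b + qj a * qre b + qk a * qi b)
   (qre a * qk b + qi a * qj b - qj a * qi b + qk a * qre b)"
instance
  by standard (auto intro!: quat_eqI simp: zero_quat_def one_quat_def plus_quat_def
      minus_quat_def uminus_quat_def times_quat_def algebra_simps)
end

definition qreal :: "real \<Rightarrow> quat" where "qreal r = Quat r 0 0 0"
definition qscale :: "real \<Rightarrow> quat \<Rightarrow> quat" where
  "qscale r q = Quat (r * qre q) (r * qi q) (r * qj q) (r * qk q)"
definition qcnj :: "quat \<Rightarrow> quat" where
  "qcnj q = Quat (qre q) (- qi q) (- qj q) (- qk q)"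
definition qnorm :: "quat \<Rightarrow> real" where
  "qnorm q = sqrt ((qre q)\<^sup>2 + (qi q)\<^sup>2 + (qj q)\<^sup>2 + (qk q)\<^sup>2)"

section \<open>Quaternion matrices (entries indexed by 0..<n)\<close>

type_synonym qmat = "nat \<Rightarrow> nat \<Rightarrow> quat"

definition qmult :: "nat \<Rightarrow> qmat \<Rightarrow> qmat \<Rightarrow> qmat" where
  "qmult n A B = (\<lambda>i j. \<Sum>m<n. A i m * B m j)"

definition qadj :: "qmat \<Rightarrow> qmat" where
  "qadj A = (\<lambda>i j. qcnj (A j i))"

definition qident :: qmat where
  "qident = (\<lambda>i j. if i = j then 1 else 0)"

definition qhermitian :: "nat \<Rightarrow> qmat \<Rightarrow> bool" where
  "qhermitian n A \<longleftrightarrow> (\<forall>i<n. \<forall>j<n. A j i = qcnj (A i j))"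

definition qunitary :: "nat \<Rightarrow> qmat \<Rightarrow> bool" where
  "qunitary n U \<longleftrightarrow> (\<forall>i<n. \<forall>j<n. qmult n (qadj U) U i j = qident i j \<and> qmult n U (qadj U) i j = qident i j)"

definition qeigenvalue_list :: "nat \<Rightarrow> qmat \<Rightarrow> (nat \<Rightarrow> real) \<Rightarrow> bool" where
  "qeigenvalue_list n A mu \<longleftrightarrow>
     (\<exists>U. qunitary n U \<and>
        (\<forall>i<n. \<forall>j<n. qmult n (qadj U) (qmult n A U) i j = (if i = j then qreal (mu i) else 0)))"

definition nonincreasing_on :: "nat \<Rightarrow> (nat \<Rightarrow> real) \<Rightarrow> bool" where
  "nonincreasing_on n f \<longleftrightarrow> (\<forall>i j. i \<le> j \<and> j < n \<longrightarrow> f j \<le> f i)"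

section \<open>Dual quaternion matrices: pairs (standard part, infinitesimal part)\<close>

type_synonym dqmat = "qmat \<times> qmat"

definition dmult :: "nat \<Rightarrow> dqmat \<Rightarrow> dqmat \<Rightarrow> dqmat" where
  "dmult n A B = (qmult n (fst A) (fst B),
                  \<lambda>i j. qmult n (fst A) (snd B) i j + qmult n (snd A) (fst B) i j)"

definition dadj :: "dqmat \<Rightarrow> dqmat" where
  "dadj A = (qadj (fst A), qadj (snd A))"

definition dhermitian :: "nat \<Rightarrow> dqmat \<Rightarrow> bool" where
  "dhermitian n A \<longleftrightarrow> qhermitian n (fst A) \<and> qhermitian n (snd A)"

text \<open>\<open>lam1, lam2\<close> are the two roots of \<open>(a-x)(b-x) = |c|^2\<close> (in some order).\<close>
definition givens_U :: "dqmat \<Rightarrow> nat \<Rightarrow> nat \<Rightarrow> real \<Rightarrow> real \<Rightarrow> qmat" where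
  "givens_U Q k l lam1 lam2 =
    (let c = fst Q k l; a = qre (fst Q k k);
         rho1 = sqrt ((a - lam1)\<^sup>2 + (qnorm c)\<^sup>2);
         rho2 = sqrt ((a - lam2)\<^sup>2 + (qnorm c)\<^sup>2)
     in (\<lambda>i j. if i = 0 \<and> j = 0 then qscale (- 1 / rho1) c
              else if i = 0 \<and> j = 1 then qscale (- 1 / rho2) c
              else if i = 1 \<and> j = 0 then qreal ((a - lam1) / rho1)
              else if i = 1 \<and> j = 1 then qreal ((a - lam2) / rho2)
              else 0))"

definition givens_W :: "dqmat \<Rightarrow> nat \<Rightarrow> nat \<Rightarrow> real \<Rightarrow> real \<Rightarrow> dqmat" where
  "givens_W Q k l lam1 lam2 =
    (let U = givens_U Q k l lam1 lam2;
         idx = (\<lambda>i::nat. if i = 0 then k else l);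
         B = (\<lambda>i j. if i < 2 \<and> j < 2 then snd Q (idx i) (idx j) else 0);
         z = qmult 2 (qadj U) (qmult 2 B U) 0 1;
         VI = (\<lambda>i j. if i = 0 \<and> j = 1 then qscale (1 / (lam2 - lam1)) z
                   else if i = 1 \<and> j = 0 then qscale (1 / (lam1 - lam2)) (qcnj z)
                   else 0);
         Vst = (\<lambda>i j. if i < 2 \<and> j < 2 \<and> i = j then 1 else 0)
     in dmult 2 (U, \<lambda>i j. 0) (Vst, VI))"

definition givens :: "dqmat \<Rightarrow> nat \<Rightarrow> nat \<Rightarrow> real \<Rightarrow> real \<Rightarrow> dqmat" where
  "givens Q k l lam1 lam2 =
    (let W = givens_W Q k l lam1 lam2;
         pos = (\<lambda>i::nat. if i = k then 0::nat else 1);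
         inb = (\<lambda>i. i = k \<or> i = l)
     in (\<lambda>i j. if inb i \<and> inb j then fst W (pos i) (pos j) else qident i j,
         \<lambda>i j. if inb i \<and> inb j then snd W (pos i) (pos j) else 0))"

text \<open>\<open>r^{(t)} = max_{i<j} |(Q_st)_{ij}|\<close> (0 if there are no off-diagonal entries).\<close>
definition off_max :: "nat \<Rightarrow> dqmat \<Rightarrow> real" where
  "off_max n Q = Max (insert 0 {qnorm (fst Q i j) | i j. i < j \<and> j < n})"

definition jacobi_step :: "nat \<Rightarrow> dqmat \<Rightarrow> dqmat \<Rightarrow> bool" where
  "jacobi_step n Q Q' \<longleftrightarrow>
    (\<exists>k l lam1 lam2. k < l \<and> l < n \<and> qnorm (fst Q k l) = off_max n Q \<and>
       lam1 \<noteq> lam2 \<and>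
       (qre (fst Q k k) - lam1) * (qre (fst Q l l) - lam1) = (qnorm (fst Q k l))\<^sup>2 \<and>
       (qre (fst Q k k) - lam2) * (qre (fst Q l l) - lam2) = (qnorm (fst Q k l))\<^sup>2 \<and>
       Q' = dmult n (dadj (givens Q k l lam1 lam2)) (dmult n Q (givens Q k l lam1 lam2)))"

definition algorithm1_run :: "nat \<Rightarrow> real \<Rightarrow> dqmat \<Rightarrow> (nat \<Rightarrow> dqmat) \<Rightarrow> bool" where
  "algorithm1_run n eps Q Qs \<longleftrightarrow>
     Qs 0 = Q \<and> (\<forall>t. off_max n (Qs t) \<ge> eps \<longrightarrow> jacobi_step n (Qs t) (Qs (Suc t)))"

end

theory Submission
  imports Defs "HOL-Combinatorics.List_Permutation"
begin

lemma quat_simps[simp]: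
  "qre 0 = 0" "qi 0 = 0" "qj 0 = 0" "qk 0 = 0"
  "qre 1 = 1" "qi 1 = 0" "qj 1 = 0" "qk 1 = 0"
  "qre (a + b) = qre a + qre b" "qi (a + b) = qi a + qi b" "qj (a + b) = qj a + qj b" "qk (a + b) = qk a + qk b"
  "qre (a - b) = qre a - qre b" "qi (a - b) = qi a - qi b" "qj (a - b) = qj a - qj b" "qk (a - b) = qk a - qk b"
  "qre (- a) = - qre a" "qi (- a) = - qi a" "qj (- a) = - qj a" "qk (- a) = - qk a"
  by (simp_all add: zero_quat_def one_quat_def plus_quat_def minus_quat_def uminus_quat_def)

lemma quat_mult_simps[simp]:
  "qre (a * b) = qre a * qre b - qi a * qi b - qj a * qj b - qk a * qk b"
  "qi (a * b) = qre a * qi b + qi a * qre b + qj a * qk b - qk a * qj b"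
  "qj (a * b) = qre a * qj b - qi a * qk b + qj a * qre b + qk a * qi b"
  "qk (a * b) = qre a * qk b + qi a * qj b - qj a * qi b + qk a * qre b"
  by (simp_all add: times_quat_def)

lemma qcnj_simps[simp]:
  "qre (qcnj a) = qre a" "qi (qcnj a) = - qi a" "qj (qcnj a) = - qj a" "qk (qcnj a) = - qk a"
  "qre (qreal r) = r" "qi (qreal r) = 0" "qj (qreal r) = 0" "qk (qreal r) = 0"
  "qre (qscale r a) = r * qre a" "qi (qscale r a) = r * qi a" "qj (qscale r a) = r * qj a" "qk (qscale r a) = r * qk a"
  by (simp_all add: qcnj_def qreal_def qscale_def)

lemma quat_sum_simps[simp]:
  "qre (sum f A) = (\<Sum>x\<in>A. qre (f x))" "qi (sum f A) = (\<Sum>x\<in>A. qi (f x))"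
  "qj (sum f A) = (\<Sum>x\<in>A. qj (f x))" "qk (sum f A) = (\<Sum>x\<in>A. qk (f x))"
  by (induction A rule: infinite_finite_induct; simp)+

lemma qcnj_mult: "qcnj (a * b) = qcnj b * qcnj a"
  by (rule quat_eqI; simp; simp add: algebra_simps)
lemma qcnj_add: "qcnj (a + b) = qcnj a + qcnj b"
  by (rule quat_eqI; simp)
lemma qcnj_0[simp]: "qcnj 0 = 0" by (rule quat_eqI; simp)
lemma qcnj_1[simp]: "qcnj 1 = 1" by (rule quat_eqI; simp)
lemma qcnj_qcnj[simp]: "qcnj (qcnj a) = a" by (rule quat_eqI; simp)
lemma qcnj_sum: "qcnj (sum f A) = (\<Sum>x\<in>A. qcnj (f x))"
  by (rule quat_eqI; simp add: sum_negf)
lemma qre_comm: "qre (a * b) = qre (b * a)" by simp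
lemma qnorm_sq: "(qnorm a)\<^sup>2 = qre (a * qcnj a)"
  by (simp add: qnorm_def power2_eq_square)
lemma qnorm_sq': "(qnorm a)\<^sup>2 = (qre a)\<^sup>2 + (qi a)\<^sup>2 + (qj a)\<^sup>2 + (qk a)\<^sup>2"
  by (simp add: qnorm_def)
lemma qnorm_nonneg: "qnorm a \<ge> 0" by (simp add: qnorm_def)
lemma qnorm_cnj[simp]: "qnorm (qcnj a) = qnorm a" by (simp add: qnorm_def)
lemma qnorm_eq0: "qnorm a = 0 \<longleftrightarrow> a = 0"
proof
  assume "qnorm a = 0"
  hence "(qre a)\<^sup>2 + (qi a)\<^sup>2 + (qj a)\<^sup>2 + (qk a)\<^sup>2 = 0" using qnorm_sq'[of a] by simp
  hence "qre a = 0 \<and> qi a = 0 \<and> qj a = 0 \<and> qk a = 0" by (smt (verit) power2_less_eq_zero_iff zero_le_power2)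
  thus "a = 0" by (intro quat_eqI) auto
qed (simp add: qnorm_def)

definition meq :: "nat \<Rightarrow> qmat \<Rightarrow> qmat \<Rightarrow> bool" where
  "meq n A B \<longleftrightarrow> (\<forall>i<n. \<forall>j<n. A i j = B i j)"

lemma qmult_assoc: "qmult n (qmult n A B) C = qmult n A (qmult n B C)"
  unfolding qmult_def
  by (auto simp: sum_distrib_left sum_distrib_right mult.assoc intro!: ext sum.swap)

lemma qadj_qadj[simp]: "qadj (qadj A) = A" by (simp add: qadj_def)

lemma qadj_mult: "qadj (qmult n A B) = qmult n (qadj B) (qadj A)"
  unfolding qmult_def qadj_def by (auto simp: qcnj_sum qcnj_mult intro!: ext)

lemma qident_left: "i < n \<Longrightarrow> qmult n qident A i j = A i j"
proof -
  assume "i < n"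
  have "\<And>m. qident i m * A m j = (if m = i then A i j else 0)" by (auto simp: qident_def)
  thus ?thesis using \<open>i < n\<close> by (simp add: qmult_def)
qed

lemma qident_right: "j < n \<Longrightarrow> qmult n A qident i j = A i j"
proof -
  assume "j < n"
  have "\<And>m. A i m * qident m j = (if m = j then A i j else 0)" by (auto simp: qident_def)
  thus ?thesis using \<open>j < n\<close> by (simp add: qmult_def)
qed

lemma qmult_cong_l: "meq n A A' \<Longrightarrow> i < n \<Longrightarrow> qmult n A B i j = qmult n A' B i j"
  unfolding qmult_def meq_def by simp
lemma qmult_cong_r: "meq n B B' \<Longrightarrow> j < n \<Longrightarrow> qmult n A B i j = qmult n A B' i j"
  unfolding qmult_def meq_def by simp

definition frob :: "nat \<Rightarrow> qmat \<Rightarrow> real" where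
  "frob n A = (\<Sum>i<n. \<Sum>j<n. (qnorm (A i j))\<^sup>2)"

lemma frob_diag: "frob n X = (\<Sum>i<n. qre (qmult n X (qadj X) i i))"
  unfolding frob_def qmult_def qadj_def quat_sum_simps qnorm_sq ..

lemma frob_adj: "frob n (qadj X) = frob n X"
  unfolding frob_def qadj_def qnorm_cnj by (rule sum.swap)

lemma frob_right:
  assumes "meq n (qmult n G (qadj G)) qident"
  shows "frob n (qmult n X G) = frob n X"
proof -
  have "qmult n (qmult n X G) (qadj (qmult n X G)) i i = qmult n X (qadj X) i i" if "i < n" for i
  proof -
    have "qmult n (qmult n X G) (qadj (qmult n X G)) i i = qmult n X (qmult n (qmult n G (qadj G)) (qadj X)) i i"
      by (simp add: qadj_mult qmult_assoc)
    also have "\<dots> = qmult n X (qmult n qident (qadj X)) i i"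
      by (rule qmult_cong_r) (use assms that in \<open>auto simp: meq_def intro: qmult_cong_l\<close>)
    also have "\<dots> = qmult n X (qadj X) i i"
      by (rule qmult_cong_r) (use that in \<open>auto simp: meq_def qident_left\<close>)
    finally show ?thesis .
  qed
  thus ?thesis by (simp add: frob_diag)
qed

lemma unitary_right: "qunitary n G \<Longrightarrow> meq n (qmult n G (qadj G)) qident"
  by (simp add: qunitary_def meq_def)
lemma unitary_left: "qunitary n G \<Longrightarrow> meq n (qmult n (qadj G) G) qident"
  by (simp add: qunitary_def meq_def)

lemma frob_sim:
  assumes "qunitary n G"
  shows "frob n (qmult n (qadj G) (qmult n A G)) = frob n A"
proof -
  have r: "meq n (qmult n G (qadj G)) qident" using assms unitary_right by blast
  have "frob n (qmult n (qadj G) (qmult n A G)) = frob n (qadj (qmult n (qadj G) (qmult n A G)))"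
    by (simp add: frob_adj)
  also have "\<dots> = frob n (qmult n (qadj (qmult n A G)) G)" by (simp add: qadj_mult)
  also have "\<dots> = frob n (qadj (qmult n A G))" using r by (rule frob_right)
  also have "\<dots> = frob n A" using r by (simp add: frob_adj frob_right)
  finally show ?thesis .
qed

lemma unitary_adj: "qunitary n W \<Longrightarrow> qunitary n (qadj W)"
  by (simp add: qunitary_def)

lemma meq_left_id:
  assumes "meq n (qmult n A' A) qident"
  shows "meq n (qmult n A' (qmult n A B)) B"
  unfolding meq_def
proof (intro allI impI)
  fix i j assume "i < n" "j < n"
  have "qmult n A' (qmult n A B) i j = qmult n (qmult n A' A) B i j" by (simp add: qmult_assoc)
  also have "\<dots> = qmult n qident B i j" using assms \<open>i<n\<close> by (rule qmult_cong_l)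
  also have "\<dots> = B i j" using \<open>i<n\<close> by (rule qident_left)
  finally show "qmult n A' (qmult n A B) i j = B i j" .
qed

lemma unitary_mult:
  assumes "qunitary n A" "qunitary n B"
  shows "qunitary n (qmult n A B)"
proof -
  have 1: "meq n (qmult n (qadj (qmult n A B)) (qmult n A B)) qident"
    unfolding meq_def
  proof (intro allI impI)
    fix i j assume ij: "i < n" "j < n"
    have "qmult n (qadj (qmult n A B)) (qmult n A B) i j = qmult n (qadj B) (qmult n (qadj A) (qmult n A B)) i j"
      by (simp add: qadj_mult qmult_assoc)
    also have "\<dots> = qmult n (qadj B) B i j"
      using meq_left_id[OF unitary_left[OF assms(1)]] ij by (intro qmult_cong_r) auto
    also have "\<dots> = qident i j" using unitary_left[OF assms(2)] ij by (auto simp: meq_def)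
    finally show "qmult n (qadj (qmult n A B)) (qmult n A B) i j = qident i j" .
  qed
  have 2: "meq n (qmult n (qmult n A B) (qadj (qmult n A B))) qident"
    unfolding meq_def
  proof (intro allI impI)
    fix i j assume ij: "i < n" "j < n"
    have "qmult n (qmult n A B) (qadj (qmult n A B)) i j = qmult n A (qmult n B (qmult n (qadj B) (qadj A))) i j"
      by (simp add: qadj_mult qmult_assoc)
    also have "\<dots> = qmult n A (qadj A) i j"
      using meq_left_id[OF unitary_right[OF assms(2)]] ij by (intro qmult_cong_r) auto
    also have "\<dots> = qident i j" using unitary_right[OF assms(1)] ij by (auto simp: meq_def)
    finally show "qmult n (qmult n A B) (qadj (qmult n A B)) i j = qident i j" .
  qed
  from 1 2 show ?thesis by (simp add: qunitary_def meq_def)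
qed

lemma herm_meq: "qhermitian n A \<longleftrightarrow> meq n (qadj A) A"
  unfolding qhermitian_def meq_def qadj_def
  by (metis qcnj_qcnj)

lemma herm_sim:
  assumes "qhermitian n A"
  shows "qhermitian n (qmult n (qadj G) (qmult n A G))"
  unfolding herm_meq meq_def
proof (intro allI impI)
  fix i j assume ij: "i < n" "j < n"
  have "qadj (qmult n (qadj G) (qmult n A G)) i j = qmult n (qadj G) (qmult n (qadj A) G) i j"
    by (simp add: qadj_mult qmult_assoc)
  also have "\<dots> = qmult n (qadj G) (qmult n A G) i j"
  proof (rule qmult_cong_r[OF _ ij(2)])
    show "meq n (qmult n (qadj A) G) (qmult n A G)"
      using assms unfolding herm_meq meq_def by (metis qmult_cong_l meq_def)
  qed
  finally show "qadj (qmult n (qadj G) (qmult n A G)) i j = qmult n (qadj G) (qmult n A G) i j" .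
qed

definition emb :: "nat \<Rightarrow> nat \<Rightarrow> qmat \<Rightarrow> qmat" where
  "emb k l X = (\<lambda>i j. if (i = k \<or> i = l) \<and> (j = k \<or> j = l)
      then X (if i = k then 0 else 1) (if j = k then 0 else 1) else qident i j)"

lemma qcnj_qident: "qcnj (qident i j) = qident j i"
  by (simp add: qident_def)

lemma emb_adj: "qadj (emb k l X) = emb k l (qadj X)"
  unfolding emb_def qadj_def by (auto simp: qcnj_qident intro!: ext)

lemma sum_two:
  fixes k l n :: nat
  assumes "k < l" "l < n" "\<And>m. m < n \<Longrightarrow> m \<noteq> k \<Longrightarrow> m \<noteq> l \<Longrightarrow> f m = 0"
  shows "(\<Sum>m<n. f m) = f k + f l"
proof -
  have "(\<Sum>m<n. f m) = (\<Sum>m\<in>{k,l}. f m)"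
    using assms by (intro sum.mono_neutral_right) auto
  thus ?thesis using assms by simp
qed

lemma sum_one:
  fixes i n :: nat
  assumes "i < n" "\<And>m. m < n \<Longrightarrow> m \<noteq> i \<Longrightarrow> f m = 0"
  shows "(\<Sum>m<n. f m) = f i"
proof -
  have "(\<Sum>m<n. f m) = (\<Sum>m\<in>{i}. f m)"
    using assms by (intro sum.mono_neutral_right) auto
  thus ?thesis by simp
qed

lemma qmult2: "qmult 2 X Y p q = X p 0 * Y 0 q + X p 1 * Y 1 q"
  by (simp add: qmult_def numeral_2_eq_2 lessThan_Suc)

lemma emb_mult:
  assumes "k < l" "l < n" "i < n" "j < n"
  shows "qmult n (emb k l X) (emb k l Y) i j = emb k l (qmult 2 X Y) i j"
proof (cases "i = k \<or> i = l")
  case True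
  note iT = True
  show ?thesis
  proof (cases "j = k \<or> j = l")
    case True
    have "qmult n (emb k l X) (emb k l Y) i j = emb k l X i k * emb k l Y k j + emb k l X i l * emb k l Y l j"
      unfolding qmult_def using assms iT True by (intro sum_two) (auto simp: emb_def qident_def)
    thus ?thesis using assms iT True by (simp add: emb_def qmult2)
  next
    case False
    have "qmult n (emb k l X) (emb k l Y) i j = emb k l X i j * emb k l Y j j"
      unfolding qmult_def using assms iT False by (intro sum_one) (auto simp: emb_def qident_def)
    thus ?thesis using assms iT False by (auto simp: emb_def qident_def)
  qed
next
  case False
  have "qmult n (emb k l X) (emb k l Y) i j = emb k l X i i * emb k l Y i j"
    unfolding qmult_def using assms False by (intro sum_one) (auto simp: emb_def qident_def)
  thus ?thesis using assms False by (auto simp: emb_def qident_def)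
qed

lemma emb_unitary:
  assumes "k < l" "l < n" "qunitary 2 U"
  shows "qunitary n (emb k l U)"
  unfolding qunitary_def
proof (intro allI impI conjI)
  fix i j assume ij: "i < n" "j < n"
  have u: "qmult 2 (qadj U) U p q = qident p q" "qmult 2 U (qadj U) p q = qident p q" if "p < 2" "q < 2" for p q
    using assms(3) that unfolding qunitary_def by auto
  have "qmult n (qadj (emb k l U)) (emb k l U) i j = emb k l (qmult 2 (qadj U) U) i j"
    by (simp only: emb_adj emb_mult assms ij)
  then show "qmult n (qadj (emb k l U)) (emb k l U) i j = qident i j"
    using assms u by (auto simp: emb_def qident_def)
  have "qmult n (emb k l U) (qadj (emb k l U)) i j = emb k l (qmult 2 U (qadj U)) i j"
    by (simp only: emb_adj emb_mult assms ij)
  then show "qmult n (emb k l U) (qadj (emb k l U)) i j = qident i j"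
    using assms u by (auto simp: emb_def qident_def)
qed

lemma givens_fst: "fst (givens Q k l lam1 lam2) = emb k l (givens_U Q k l lam1 lam2)"
  unfolding givens_def givens_W_def Let_def dmult_def emb_def
  by (auto simp: qmult2 intro!: ext)

lemma roots_facts:
  fixes a b s lam1 lam2 :: real
  assumes "(a - lam1) * (b - lam1) = s" "(a - lam2) * (b - lam2) = s" "lam1 \<noteq> lam2"
  shows "lam1 + lam2 = a + b" "(a - lam1) * (a - lam2) = - s" "lam1\<^sup>2 + lam2\<^sup>2 = a\<^sup>2 + b\<^sup>2 + 2 * s"
proof -
  have "(lam2 - lam1) * (a + b - lam1 - lam2) = 0" using assms(1,2) by (simp add: algebra_simps)
  thus 1: "lam1 + lam2 = a + b" using assms(3) by simp
  show "(a - lam1) * (a - lam2) = - s" using assms(1) 1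
    by (smt (verit, ccfv_threshold) mult_minus_right)
  show "lam1\<^sup>2 + lam2\<^sup>2 = a\<^sup>2 + b\<^sup>2 + 2 * s"
  proof -
    have l2: "lam2 = a + b - lam1" using 1 by simp
    show ?thesis unfolding assms(1)[symmetric] l2 by (simp add: power2_eq_square algebra_simps)
  qed
qed

lemma key_expand:
  fixes c :: quat and a b u v :: real
  shows "qre (qcnj (qscale u c) * (qreal a * qscale u c + c * qreal v)
     + qcnj (qreal v) * (qcnj c * qscale u c + qreal b * qreal v)) = a * u\<^sup>2 * (qnorm c)\<^sup>2 + 2 * u * v * (qnorm c)\<^sup>2 + b * v\<^sup>2"
  unfolding qnorm_sq' by (simp add: power2_eq_square algebra_simps)

lemma key_diag:
  fixes c :: quat and a b lam r :: real
  assumes "(a - lam) * (b - lam) = (qnorm c)\<^sup>2" "r = sqrt ((a - lam)\<^sup>2 + (qnorm c)\<^sup>2)" "c \<noteq> 0"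
  shows "qre (qcnj (qscale (-1/r) c) * (qreal a * qscale (-1/r) c + c * qreal ((a-lam)/r))
     + qcnj (qreal ((a-lam)/r)) * (qcnj c * qscale (-1/r) c + qreal b * qreal ((a-lam)/r))) = lam"
proof -
  define s where "s = (qnorm c)\<^sup>2"
  have sp: "s > 0" using assms(3) qnorm_eq0[of c] qnorm_nonneg[of c] s_def by auto
  have r2: "r\<^sup>2 = (a - lam)\<^sup>2 + s" using assms(2) s_def sp by (simp add: add_pos_nonneg)
  have rp: "r > 0" using assms(2) s_def sp by (simp add: add_nonneg_pos)
  have e: "(a - lam) * (b - lam) = s" using assms(1) s_def by simp
  have "a * (-1/r)\<^sup>2 * s + 2 * (-1/r) * ((a-lam)/r) * s + b * ((a-lam)/r)\<^sup>2 = (a * s - 2 * (a - lam) * s + b * (a-lam)\<^sup>2) / r\<^sup>2"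
    using rp by (simp add: field_simps power2_eq_square)
  also have "a * s - 2 * (a - lam) * s + b * (a-lam)\<^sup>2 = lam * r\<^sup>2"
    unfolding r2 e[symmetric] by (simp add: power2_eq_square algebra_simps)
  also have "lam * r\<^sup>2 / r\<^sup>2 = lam" using rp by simp
  finally show ?thesis unfolding key_expand s_def .
qed

definition M2 :: "quat \<Rightarrow> real \<Rightarrow> real \<Rightarrow> real \<Rightarrow> real \<Rightarrow> qmat" where
  "M2 c u1 u2 v1 v2 = (\<lambda>i j. if i = 0 \<and> j = 0 then qscale u1 c
              else if i = 0 \<and> j = 1 then qscale u2 c
              else if i = 1 \<and> j = 0 then qreal v1
              else if i = 1 \<and> j = 1 then qreal v2
              else 0)"

lemma M2_unitary:
  assumes "u1\<^sup>2 * (qnorm c)\<^sup>2 + v1\<^sup>2 = 1" "u2\<^sup>2 * (qnorm c)\<^sup>2 + v2\<^sup>2 = 1"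
    "u1 * u2 * (qnorm c)\<^sup>2 + v1 * v2 = 0" "(u1\<^sup>2 + u2\<^sup>2) * (qnorm c)\<^sup>2 = 1"
    "u1 * v1 + u2 * v2 = 0" "v1\<^sup>2 + v2\<^sup>2 = 1"
  shows "qunitary 2 (M2 c u1 u2 v1 v2)"
proof -
  define s where "s = (qnorm c)\<^sup>2"
  have s: "s = (qre c)\<^sup>2 + (qi c)\<^sup>2 + (qj c)\<^sup>2 + (qk c)\<^sup>2" using qnorm_sq' s_def by simp
  have a: "u1\<^sup>2 * s + v1\<^sup>2 = 1" "u2\<^sup>2 * s + v2\<^sup>2 = 1"
    "u1 * u2 * s + v1 * v2 = 0" "(u1\<^sup>2 + u2\<^sup>2) * s = 1"
    "u1 * v1 + u2 * v2 = 0" "v1\<^sup>2 + v2\<^sup>2 = 1" using assms s_def by auto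
  have e1: "qre c * qre c + qi c * qi c + qj c * qj c + qk c * qk c = s" using s by (simp add: power2_eq_square)
  have f: "u1 * (v1 * x) + u2 * (v2 * x) = 0" "- (u1 * (v1 * x)) = u2 * (v2 * x)" for x
  proof -
    have "u1 * (v1 * x) + u2 * (v2 * x) = (u1 * v1 + u2 * v2) * x" by (simp add: algebra_simps)
    thus "u1 * (v1 * x) + u2 * (v2 * x) = 0" using a(5) by simp
    thus "- (u1 * (v1 * x)) = u2 * (v2 * x)" by linarith
  qed
  have less2: "i < (2::nat) \<longleftrightarrow> i = 0 \<or> i = 1" for i by auto
  show ?thesis unfolding qunitary_def qmult2 less2
    apply (intro allI impI conjI; elim disjE; simp add: M2_def qadj_def qident_def; intro quat_eqI; simp)
    using a[unfolded s] apply (simp_all add: algebra_simps power2_eq_square f)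
    done
qed

lemma givens_U_M2:
  "givens_U Q k l lam1 lam2 = M2 (fst Q k l)
     (- 1 / sqrt ((qre (fst Q k k) - lam1)\<^sup>2 + (qnorm (fst Q k l))\<^sup>2))
     (- 1 / sqrt ((qre (fst Q k k) - lam2)\<^sup>2 + (qnorm (fst Q k l))\<^sup>2))
     ((qre (fst Q k k) - lam1) / sqrt ((qre (fst Q k k) - lam1)\<^sup>2 + (qnorm (fst Q k l))\<^sup>2))
     ((qre (fst Q k k) - lam2) / sqrt ((qre (fst Q k k) - lam2)\<^sup>2 + (qnorm (fst Q k l))\<^sup>2))"
  unfolding givens_U_def M2_def Let_def ..

lemma U_unitary:
  fixes x1 x2 s :: real
  assumes "x1 * x2 = - (qnorm c)\<^sup>2" "c \<noteq> 0"
  shows "qunitary 2 (M2 c (- 1 / sqrt (x1\<^sup>2 + (qnorm c)\<^sup>2)) (- 1 / sqrt (x2\<^sup>2 + (qnorm c)\<^sup>2))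
      (x1 / sqrt (x1\<^sup>2 + (qnorm c)\<^sup>2)) (x2 / sqrt (x2\<^sup>2 + (qnorm c)\<^sup>2)))"
proof -
  define s where "s = (qnorm c)\<^sup>2"
  have sp: "s > 0" using assms(2) qnorm_eq0[of c] qnorm_nonneg[of c] s_def by auto
  define r1 where "r1 = sqrt (x1\<^sup>2 + s)"
  define r2 where "r2 = sqrt (x2\<^sup>2 + s)"
  have r1p: "r1 > 0" and r2p: "r2 > 0" unfolding r1_def r2_def using sp by (simp_all add: add_nonneg_pos)
  have R1: "r1\<^sup>2 = x1\<^sup>2 + s" and R2: "r2\<^sup>2 = x2\<^sup>2 + s"
    unfolding r1_def r2_def using sp by (simp_all add: add_nonneg_pos less_imp_le)
  have x: "x1 * x2 = - s" using assms(1) s_def by simp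
  have xx: "x1\<^sup>2 * x2\<^sup>2 = s\<^sup>2" using x by (metis power_mult_distrib power2_minus)
  have c1: "(- 1 / r1)\<^sup>2 * s + (x1 / r1)\<^sup>2 = 1"
  proof -
    have "(- 1 / r1)\<^sup>2 * s + (x1 / r1)\<^sup>2 = (s + x1\<^sup>2) / r1\<^sup>2" by (simp add: power_divide add_divide_distrib)
    moreover have "s + x1\<^sup>2 > 0" using sp by (simp add: add_pos_nonneg)
    ultimately show ?thesis using R1 r1p by (simp add: add.commute)
  qed
  have c2: "(- 1 / r2)\<^sup>2 * s + (x2 / r2)\<^sup>2 = 1"
  proof -
    have "(- 1 / r2)\<^sup>2 * s + (x2 / r2)\<^sup>2 = (s + x2\<^sup>2) / r2\<^sup>2" by (simp add: power_divide add_divide_distrib)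
    moreover have "s + x2\<^sup>2 > 0" using sp by (simp add: add_pos_nonneg)
    ultimately show ?thesis using R2 r2p by (simp add: add.commute)
  qed
  have c3: "(- 1 / r1) * (- 1 / r2) * s + (x1 / r1) * (x2 / r2) = 0"
  proof -
    have "(- 1 / r1) * (- 1 / r2) * s + (x1 / r1) * (x2 / r2) = (s + x1 * x2) / (r1 * r2)"
      using r1p r2p by (simp add: field_simps)
    thus ?thesis using x by simp
  qed
  have c4: "((- 1 / r1)\<^sup>2 + (- 1 / r2)\<^sup>2) * s = 1"
  proof -
    have "((- 1 / r1)\<^sup>2 + (- 1 / r2)\<^sup>2) * s = s * (r1\<^sup>2 + r2\<^sup>2) / (r1\<^sup>2 * r2\<^sup>2)"
      using r1p r2p by (simp add: field_simps power_divide)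
    also have "s * (r1\<^sup>2 + r2\<^sup>2) = r1\<^sup>2 * r2\<^sup>2"
      unfolding R1 R2 using xx by (simp add: algebra_simps power2_eq_square)
    finally show ?thesis using r1p r2p by simp
  qed
  have c5: "(- 1 / r1) * (x1 / r1) + (- 1 / r2) * (x2 / r2) = 0"
  proof -
    have "(- 1 / r1) * (x1 / r1) + (- 1 / r2) * (x2 / r2) = - (x1 * r2\<^sup>2 + x2 * r1\<^sup>2) / (r1\<^sup>2 * r2\<^sup>2)"
      using r1p r2p by (simp add: field_simps power2_eq_square)
    also have "x1 * r2\<^sup>2 + x2 * r1\<^sup>2 = (x1 * x2 + s) * (x1 + x2)"
      unfolding R1 R2 by (simp add: algebra_simps power2_eq_square)
    finally show ?thesis using x by simp
  qed
  have c6: "(x1 / r1)\<^sup>2 + (x2 / r2)\<^sup>2 = 1"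
  proof -
    have "(x1 / r1)\<^sup>2 + (x2 / r2)\<^sup>2 = (x1\<^sup>2 * r2\<^sup>2 + x2\<^sup>2 * r1\<^sup>2) / (r1\<^sup>2 * r2\<^sup>2)"
      using r1p r2p by (simp add: field_simps power_divide)
    also have "x1\<^sup>2 * r2\<^sup>2 + x2\<^sup>2 * r1\<^sup>2 = r1\<^sup>2 * r2\<^sup>2"
      unfolding R1 R2 using xx by (simp add: algebra_simps power2_eq_square)
    finally show ?thesis using r1p r2p by simp
  qed
  show ?thesis
    using M2_unitary[of "- 1 / r1" c "x1 / r1" "- 1 / r2" "x2 / r2"] c1 c2 c3 c4 c5 c6
    unfolding s_def r1_def r2_def by simp
qed

lemma herm_diag: "qhermitian n A \<Longrightarrow> i < n \<Longrightarrow> A i i = qreal (qre (A i i))"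
proof -
  assume "qhermitian n A" "i < n"
  hence e: "A i i = qcnj (A i i)" unfolding qhermitian_def by blast
  show ?thesis
    by (rule quat_eqI) (use arg_cong[OF e, of qi] arg_cong[OF e, of qj] arg_cong[OF e, of qk] in simp_all)
qed

lemma herm_off: "qhermitian n A \<Longrightarrow> i < n \<Longrightarrow> j < n \<Longrightarrow> A j i = qcnj (A i j)"
  unfolding qhermitian_def by blast

lemma emb_sim_diag_out:
  assumes "k < l" "l < n" "i < n" "i \<noteq> k" "i \<noteq> l"
  shows "qmult n (qadj (emb k l U)) (qmult n A (emb k l U)) i i = A i i"
proof -
  have 1: "qmult n A (emb k l U) i i = A i i"
    unfolding qmult_def using assms by (subst sum_one[of i]) (auto simp: emb_def qident_def)
  show ?thesis
    unfolding qmult_def[of n "qadj _"] using assms 1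
    by (subst sum_one[of i]) (auto simp: emb_def qident_def qadj_def)
qed

lemma emb_sim_diag_in:
  assumes "k < l" "l < n" "p = k \<or> p = l"
  defines "pp \<equiv> (if p = k then 0 else 1)"
  shows "qmult n (qadj (emb k l U)) (qmult n A (emb k l U)) p p =
    qcnj (U 0 pp) * (A k k * U 0 pp + A k l * U 1 pp) + qcnj (U 1 pp) * (A l k * U 0 pp + A l l * U 1 pp)"
proof -
  have 1: "qmult n A (emb k l U) m p = A m k * U 0 pp + A m l * U 1 pp" for m
    unfolding qmult_def using assms by (subst sum_two[of k l]) (auto simp: emb_def qident_def)
  have 2: "qmult n (qadj (emb k l U)) (qmult n A (emb k l U)) p p =
    qadj (emb k l U) p k * qmult n A (emb k l U) k p + qadj (emb k l U) p l * qmult n A (emb k l U) l p"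
    unfolding qmult_def[of n "qadj _"] using assms
    by (intro sum_two) (auto simp: emb_def qident_def qadj_def)
  show ?thesis unfolding 2 1 using assms by (auto simp: emb_def qadj_def)
qed

definition offF :: "nat \<Rightarrow> qmat \<Rightarrow> real" where
  "offF n A = (\<Sum>i<n. \<Sum>j<n. if i = j then 0 else (qnorm (A i j))\<^sup>2)"

lemma sum_split_one:
  fixes f :: "nat \<Rightarrow> real"
  assumes "i < n"
  shows "(\<Sum>j<n. f j) = (\<Sum>j<n. if i = j then 0 else f j) + f i"
proof -
  have "(\<Sum>j<n. f j) = (\<Sum>j<n. (if i = j then 0 else f j) + (if i = j then f j else 0))"
    by (rule sum.cong) auto
  also have "\<dots> = (\<Sum>j<n. if i = j then 0 else f j) + (\<Sum>j<n. if i = j then f j else 0)"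
    by (rule sum.distrib)
  also have "(\<Sum>j<n. if i = j then f j else 0) = f i" using assms by (simp add: sum.delta)
  finally show ?thesis .
qed

lemma frob_split: "frob n A = offF n A + (\<Sum>i<n. (qnorm (A i i))\<^sup>2)"
proof -
  have "frob n A = (\<Sum>i<n. (\<Sum>j<n. if i = j then 0 else (qnorm (A i j))\<^sup>2) + (qnorm (A i i))\<^sup>2)"
    unfolding frob_def by (rule sum.cong) (auto intro: sum_split_one)
  thus ?thesis unfolding offF_def by (simp add: sum.distrib)
qed

lemma qnorm_qreal_sq: "(qnorm (qreal r))\<^sup>2 = r\<^sup>2"
  by (simp add: qnorm_sq')

lemma frob_split_herm: "qhermitian n A \<Longrightarrow> frob n A = offF n A + (\<Sum>i<n. (qre (A i i))\<^sup>2)"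
  unfolding frob_split using herm_diag[of n A] qnorm_qreal_sq
  by (metis (no_types, lifting) lessThan_iff sum.cong)

lemma offF_nonneg: "offF n A \<ge> 0"
  unfolding offF_def by (intro sum_nonneg) auto

lemma jacobi_props:
  fixes Qt :: dqmat and lam1 lam2 :: real and k l n :: nat
  defines "A \<equiv> fst Qt"
  defines "G \<equiv> fst (givens Qt k l lam1 lam2)"
  defines "B \<equiv> qmult n (qadj G) (qmult n A G)"
  assumes herm: "qhermitian n A" and kl: "k < l" "l < n" and c0: "A k l \<noteq> 0"
    and lneq: "lam1 \<noteq> lam2"
    and r1: "(qre (A k k) - lam1) * (qre (A l l) - lam1) = (qnorm (A k l))\<^sup>2"
    and r2: "(qre (A k k) - lam2) * (qre (A l l) - lam2) = (qnorm (A k l))\<^sup>2"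
  shows "qunitary n G" "qhermitian n B" "offF n B = offF n A - 2 * (qnorm (A k l))\<^sup>2"
proof -
  define a where "a = qre (A k k)"
  define b where "b = qre (A l l)"
  define c where "c = A k l"
  define s where "s = (qnorm c)\<^sup>2"
  define rr1 where "rr1 = sqrt ((a - lam1)\<^sup>2 + s)"
  define rr2 where "rr2 = sqrt ((a - lam2)\<^sup>2 + s)"
  have rf: "lam1 + lam2 = a + b" "(a - lam1) * (a - lam2) = - s" "lam1\<^sup>2 + lam2\<^sup>2 = a\<^sup>2 + b\<^sup>2 + 2 * s"
    using roots_facts[OF r1 r2 lneq] unfolding a_def b_def s_def c_def by auto
  have UM: "givens_U Qt k l lam1 lam2 = M2 c (- 1 / rr1) (- 1 / rr2) ((a - lam1) / rr1) ((a - lam2) / rr2)"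
    unfolding givens_U_M2 rr1_def rr2_def a_def c_def s_def A_def ..
  have Gd: "G = emb k l (M2 c (- 1 / rr1) (- 1 / rr2) ((a - lam1) / rr1) ((a - lam2) / rr2))"
    unfolding G_def givens_fst UM ..
  have Uu: "qunitary 2 (M2 c (- 1 / rr1) (- 1 / rr2) ((a - lam1) / rr1) ((a - lam2) / rr2))"
    unfolding rr1_def rr2_def s_def using U_unitary[of "a - lam1" "a - lam2" c] rf(2) c0 c_def s_def by simp
  show uG: "qunitary n G" unfolding Gd using emb_unitary[OF kl Uu] .
  show hB: "qhermitian n B" unfolding B_def using herm_sim[OF herm] .
  have Akk: "A k k = qreal a" using herm_diag[OF herm, of k] kl unfolding a_def by simp
  have All: "A l l = qreal b" using herm_diag[OF herm, of l] kl unfolding b_def by simp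
  have Alk: "A l k = qcnj c" using herm_off[OF herm, of k l] kl unfolding c_def by simp
  have cn0: "c \<noteq> 0" using c0 c_def by simp
  have Bk: "qre (B k k) = lam1"
  proof -
    have "B k k = qcnj (qscale (- 1 / rr1) c) * (qreal a * qscale (- 1 / rr1) c + c * qreal ((a - lam1) / rr1))
       + qcnj (qreal ((a - lam1) / rr1)) * (qcnj c * qscale (- 1 / rr1) c + qreal b * qreal ((a - lam1) / rr1))"
      unfolding B_def Gd using kl by (subst emb_sim_diag_in) (auto simp: M2_def Akk All Alk c_def)
    thus ?thesis using key_diag[of a lam1 b c rr1] r1 cn0 unfolding a_def b_def c_def rr1_def s_def by simp
  qed
  have Bl: "qre (B l l) = lam2"
  proof -
    have "B l l = qcnj (qscale (- 1 / rr2) c) * (qreal a * qscale (- 1 / rr2) c + c * qreal ((a - lam2) / rr2))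
       + qcnj (qreal ((a - lam2) / rr2)) * (qcnj c * qscale (- 1 / rr2) c + qreal b * qreal ((a - lam2) / rr2))"
      unfolding B_def Gd using kl by (subst emb_sim_diag_in) (auto simp: M2_def Akk All Alk c_def)
    thus ?thesis using key_diag[of a lam2 b c rr2] r2 cn0 unfolding a_def b_def c_def rr2_def s_def by simp
  qed
  have Bo: "B i i = A i i" if "i < n" "i \<noteq> k" "i \<noteq> l" for i
    unfolding B_def Gd using kl that by (rule emb_sim_diag_out)
  have fr: "frob n B = frob n A" unfolding B_def using frob_sim[OF uG] .
  have ds: "(\<Sum>i<n. (qre (B i i))\<^sup>2) - (\<Sum>i<n. (qre (A i i))\<^sup>2) = 2 * s"
  proof -
    have "(\<Sum>i<n. (qre (B i i))\<^sup>2) - (\<Sum>i<n. (qre (A i i))\<^sup>2) = (\<Sum>i<n. (qre (B i i))\<^sup>2 - (qre (A i i))\<^sup>2)"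
      by (simp add: sum_subtractf)
    also have "\<dots> = ((qre (B k k))\<^sup>2 - (qre (A k k))\<^sup>2) + ((qre (B l l))\<^sup>2 - (qre (A l l))\<^sup>2)"
      using kl Bo by (intro sum_two) auto
    also have "\<dots> = 2 * s" using Bk Bl rf(3) unfolding a_def b_def by simp
    finally show ?thesis .
  qed
  show "offF n B = offF n A - 2 * (qnorm (A k l))\<^sup>2"
    using frob_split_herm[OF hB] frob_split_herm[OF herm] fr ds unfolding s_def c_def by linarith
qed

lemma fst_step: "fst (dmult n (dadj Gd) (dmult n Q Gd)) = qmult n (qadj (fst Gd)) (qmult n (fst Q) (fst Gd))"
  by (simp add: dmult_def dadj_def)

lemma kyfan:
  fixes d w :: "nat \<Rightarrow> real"
  assumes dec: "nonincreasing_on n d" and w01: "\<And>i. i < n \<Longrightarrow> 0 \<le> w i \<and> w i \<le> 1"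
    and ws: "(\<Sum>i<n. w i) = real k" and kn: "k \<le> n"
  shows "(\<Sum>i<n. d i * w i) \<le> (\<Sum>i<k. d i)"
proof (cases "k = 0")
  case True
  hence "\<forall>i\<in>{..<n}. w i = 0" using ws w01 sum_nonneg_eq_0_iff[of "{..<n}" w] by auto
  thus ?thesis using True by simp
next
  case False
  note k0 = False
  define t where "t = d (k - 1)"
  have A: "(\<Sum>i<n. d i * w i) = (\<Sum>i<n. (d i - t) * w i) + t * k"
    using ws by (simp add: algebra_simps sum.distrib sum_subtractf sum_distrib_left[symmetric])
  have B: "(\<Sum>i<n. (d i - t) * w i) \<le> (\<Sum>i<n. if i < k then d i - t else 0)"
  proof (rule sum_mono)
    fix i assume "i \<in> {..<n}"
    hence i: "i < n" by simp
    show "(d i - t) * w i \<le> (if i < k then d i - t else 0)"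
    proof (cases "i < k")
      case True
      have "i \<le> k - 1" "k - 1 < n" using True kn k0 by auto
      hence "d i \<ge> t" using dec unfolding t_def nonincreasing_on_def by blast
      thus ?thesis using True w01[OF i] by (simp add: mult_left_le)
    next
      case F: False
      hence "d i \<le> t" using dec i k0 unfolding t_def nonincreasing_on_def by auto
      thus ?thesis using F w01[OF i] by (simp add: mult_nonpos_nonneg)
    qed
  qed
  have C: "(\<Sum>i<n. if i < k then d i - t else 0) = (\<Sum>i<k. d i - t)"
  proof -
    have "(\<Sum>i<n. if i < k then d i - t else 0) = (\<Sum>i\<in>{..<n} \<inter> {i. i < k}. d i - t)"
      by (simp add: sum.inter_restrict)
    also have "{..<n} \<inter> {i. i < k} = {..<k}" using kn by auto
    finally show ?thesis .
  qed
  have D: "(\<Sum>i<k. d i - t) = (\<Sum>i<k. d i) - t * k"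
    by (simp add: sum_subtractf)
  show ?thesis using A B C D by linarith
qed

lemma abel:
  fixes mu e :: "nat \<Rightarrow> real"
  assumes dec: "nonincreasing_on n mu" and S: "\<And>k. k \<le> n \<Longrightarrow> (\<Sum>j<k. e j) \<ge> 0"
    and Sn: "(\<Sum>j<n. e j) = 0"
  shows "(\<Sum>j<n. mu j * e j) \<ge> 0"
proof (cases n)
  case 0 thus ?thesis by simp
next
  case (Suc n')
  have claim: "m < n \<Longrightarrow> (\<Sum>j<Suc m. mu j * e j) \<ge> mu m * (\<Sum>j<Suc m. e j)" for m
  proof (induction m)
    case 0 thus ?case by simp
  next
    case (Suc m)
    hence IH: "(\<Sum>j<Suc m. mu j * e j) \<ge> mu m * (\<Sum>j<Suc m. e j)" by simp
    have "mu (Suc m) \<le> mu m" using dec Suc.prems unfolding nonincreasing_on_def by auto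
    moreover have "(\<Sum>j<Suc m. e j) \<ge> 0" using S[of "Suc m"] Suc.prems by simp
    ultimately have "mu m * (\<Sum>j<Suc m. e j) \<ge> mu (Suc m) * (\<Sum>j<Suc m. e j)"
      by (simp add: mult_right_mono)
    with IH show ?case by (simp add: algebra_simps)
  qed
  from claim[of n'] Suc Sn show ?thesis by simp
qed

lemma majorization:
  fixes P :: "nat \<Rightarrow> nat \<Rightarrow> real" and mu d :: "nat \<Rightarrow> real"
  assumes Pnn: "\<And>i j. i < n \<Longrightarrow> j < n \<Longrightarrow> P i j \<ge> 0"
    and rows: "\<And>i. i < n \<Longrightarrow> (\<Sum>j<n. P i j) = 1"
    and cols: "\<And>j. j < n \<Longrightarrow> (\<Sum>i<n. P i j) = 1"
    and mdec: "nonincreasing_on n mu" and ddec: "nonincreasing_on n d"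
    and dP: "\<And>i. i < n \<Longrightarrow> d i = (\<Sum>j<n. P i j * mu j)"
  shows "(\<Sum>i<n. (mu i - d i)\<^sup>2) \<le> (\<Sum>i<n. (mu i)\<^sup>2) - (\<Sum>i<n. (d i)\<^sup>2)"
proof -
  define y where "y j = (\<Sum>i<n. P i j * d i)" for j
  have dd: "(\<Sum>i<n. (d i)\<^sup>2) = (\<Sum>j<n. mu j * y j)"
  proof -
    have "(\<Sum>i<n. (d i)\<^sup>2) = (\<Sum>i<n. d i * (\<Sum>j<n. P i j * mu j))"
      using dP by (simp add: power2_eq_square)
    also have "\<dots> = (\<Sum>i<n. \<Sum>j<n. mu j * (P i j * d i))"
      by (simp add: sum_distrib_left algebra_simps)
    also have "\<dots> = (\<Sum>j<n. \<Sum>i<n. mu j * (P i j * d i))" by (rule sum.swap)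
    also have "\<dots> = (\<Sum>j<n. mu j * y j)" by (simp add: y_def sum_distrib_left)
    finally show ?thesis .
  qed
  have S: "(\<Sum>j<k. d j - y j) \<ge> 0" if kn: "k \<le> n" for k
  proof -
    define w where "w i = (\<Sum>j<k. P i j)" for i
    have w01: "0 \<le> w i \<and> w i \<le> 1" if "i < n" for i
    proof
      show "0 \<le> w i" unfolding w_def using Pnn that kn by (intro sum_nonneg) auto
      have "w i \<le> (\<Sum>j<n. P i j)" unfolding w_def using Pnn that kn
        by (intro sum_mono2) auto
      thus "w i \<le> 1" using rows that by simp
    qed
    have ws: "(\<Sum>i<n. w i) = real k"
    proof -
      have "(\<Sum>i<n. w i) = (\<Sum>j<k. \<Sum>i<n. P i j)" unfolding w_def by (rule sum.swap)
      also have "\<dots> = (\<Sum>j<k. 1)" using cols kn by (intro sum.cong) auto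
      finally show ?thesis by simp
    qed
    have "(\<Sum>j<k. y j) = (\<Sum>i<n. \<Sum>j<k. P i j * d i)" unfolding y_def by (rule sum.swap)
    also have "\<dots> = (\<Sum>i<n. d i * w i)" unfolding w_def by (simp add: sum_distrib_left algebra_simps)
    also have "\<dots> \<le> (\<Sum>i<k. d i)" using kyfan[OF ddec w01 ws kn] by simp
    finally show ?thesis by (simp add: sum_subtractf)
  qed
  have Sn: "(\<Sum>j<n. d j - y j) = 0"
  proof -
    have "(\<Sum>j<n. y j) = (\<Sum>i<n. \<Sum>j<n. P i j * d i)" unfolding y_def by (rule sum.swap)
    also have "\<dots> = (\<Sum>i<n. d i * (\<Sum>j<n. P i j))" by (simp add: sum_distrib_left algebra_simps)
    also have "\<dots> = (\<Sum>i<n. d i)" using rows by simp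
    finally show ?thesis by (simp add: sum_subtractf)
  qed
  have "(\<Sum>j<n. mu j * (d j - y j)) \<ge> 0" using abel[OF mdec S Sn] by simp
  hence "(\<Sum>j<n. mu j * d j) \<ge> (\<Sum>i<n. (d i)\<^sup>2)"
    unfolding dd by (simp add: algebra_simps sum_subtractf)
  moreover have "(\<Sum>i<n. (mu i - d i)\<^sup>2) = (\<Sum>i<n. (mu i)\<^sup>2) - 2 * (\<Sum>j<n. mu j * d j) + (\<Sum>i<n. (d i)\<^sup>2)"
    by (simp add: power2_diff sum.distrib sum_subtractf sum_distrib_left algebra_simps)
  ultimately show ?thesis by linarith
qed

lemma off_max_fin:
  fixes Q :: dqmat and n :: nat
  shows "finite (insert 0 {qnorm (fst Q i j) | i j. i < j \<and> j < n})"
proof -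
  have "{qnorm (fst Q i j) | i j. i < j \<and> j < n} \<subseteq> (\<lambda>(i, j). qnorm (fst Q i j)) ` ({..<n} \<times> {..<n})"
  proof
    fix x assume "x \<in> {qnorm (fst Q i j) | i j. i < j \<and> j < n}"
    then obtain i j where h: "x = qnorm (fst Q i j)" "i < j" "j < n" by blast
    show "x \<in> (\<lambda>(i, j). qnorm (fst Q i j)) ` ({..<n} \<times> {..<n})"
    proof (rule rev_image_eqI[of "(i, j)"])
      show "(i, j) \<in> {..<n} \<times> {..<n}" using h by auto
      show "x = (\<lambda>(i, j). qnorm (fst Q i j)) (i, j)" using h by simp
    qed
  qed
  thus ?thesis by (meson finite_SigmaI finite_imageI finite_insert finite_lessThan finite_subset)
qed

lemma off_max_ge: "i < j \<Longrightarrow> j < n \<Longrightarrow> qnorm (fst Q i j) \<le> off_max n Q"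
  unfolding off_max_def by (rule Max_ge[OF off_max_fin]) auto

lemma off_max_nonneg: "0 \<le> off_max n Q"
  unfolding off_max_def by (rule Max_ge[OF off_max_fin]) auto

lemma offF_lt:
  assumes herm: "qhermitian n (fst Q)" and n2: "n \<ge> 2" and lt: "off_max n Q < eps"
  shows "offF n (fst Q) < real (n * (n - 1)) * eps\<^sup>2"
proof -
  define m where "m = off_max n Q"
  have m0: "0 \<le> m" using off_max_nonneg m_def by simp
  have b: "(qnorm (fst Q i j))\<^sup>2 \<le> m\<^sup>2" if "i < n" "j < n" "i \<noteq> j" for i j
  proof -
    have "qnorm (fst Q i j) \<le> m"
    proof (cases "i < j")
      case True thus ?thesis using off_max_ge that m_def by simp
    next
      case False
      hence "j < i" using that by simp
      hence "qnorm (fst Q j i) \<le> m" using off_max_ge that m_def by simp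
      thus ?thesis using herm_off[OF herm, of j i] that by simp
    qed
    thus ?thesis using qnorm_nonneg by (simp add: power_mono)
  qed
  have "offF n (fst Q) \<le> (\<Sum>i<n. \<Sum>j<n. if i = j then 0 else m\<^sup>2)"
    unfolding offF_def
  proof (rule sum_mono)
    fix i assume i: "i \<in> {..<n}"
    show "(\<Sum>j<n. if i = j then 0 else (qnorm (fst Q i j))\<^sup>2) \<le> (\<Sum>j<n. if i = j then 0 else m\<^sup>2)"
    proof (rule sum_mono)
      fix j assume j: "j \<in> {..<n}"
      show "(if i = j then 0 else (qnorm (fst Q i j))\<^sup>2) \<le> (if i = j then 0 else m\<^sup>2)"
        using b[of i j] i j by simp
    qed
  qed
  also have "\<dots> = (\<Sum>i<n. real n * m\<^sup>2 - m\<^sup>2)"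
  proof (rule sum.cong)
    fix i assume "i \<in> {..<n}"
    thus "(\<Sum>j<n. if i = j then 0 else m\<^sup>2) = real n * m\<^sup>2 - m\<^sup>2"
      using sum_split_one[of i n "\<lambda>_. m\<^sup>2"] by simp
  qed simp
  also have "\<dots> = real (n * (n - 1)) * m\<^sup>2" using n2 by (simp add: of_nat_diff algebra_simps)
  also have "\<dots> < real (n * (n - 1)) * eps\<^sup>2"
  proof -
    have h1: "m\<^sup>2 < eps\<^sup>2" using m0 lt m_def by (simp add: power_strict_mono)
    have h2: "real (n * (n - 1)) > 0" using n2 by simp
    show ?thesis using mult_strict_left_mono[OF h1 h2] .
  qed
  finally show ?thesis .
qed

lemma step_fst:
  assumes js: "jacobi_step n Qt Qn" and herm: "qhermitian n (fst Qt)" and pos: "off_max n Qt > 0"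
  shows "\<exists>G. qunitary n G \<and> fst Qn = qmult n (qadj G) (qmult n (fst Qt) G) \<and> qhermitian n (fst Qn) \<and>
     offF n (fst Qn) = offF n (fst Qt) - 2 * (off_max n Qt)\<^sup>2"
proof -
  obtain k l lam1 lam2 where kl: "k < l" "l < n" and e: "qnorm (fst Qt k l) = off_max n Qt"
    and ln: "lam1 \<noteq> lam2"
    and r1: "(qre (fst Qt k k) - lam1) * (qre (fst Qt l l) - lam1) = (qnorm (fst Qt k l))\<^sup>2"
    and r2: "(qre (fst Qt k k) - lam2) * (qre (fst Qt l l) - lam2) = (qnorm (fst Qt k l))\<^sup>2"
    and Qn: "Qn = dmult n (dadj (givens Qt k l lam1 lam2)) (dmult n Qt (givens Qt k l lam1 lam2))"
    using js unfolding jacobi_step_def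
    apply (elim exE conjE)
    apply (rule that)
    apply assumption+
    done
  have c0: "fst Qt k l \<noteq> 0"
  proof
    assume "fst Qt k l = 0"
    hence "qnorm (fst Qt k l) = 0" by (simp add: qnorm_eq0)
    thus False using e pos by simp
  qed
  note J = jacobi_props[OF herm kl c0 ln r1 r2]
  have f: "fst Qn = qmult n (qadj (fst (givens Qt k l lam1 lam2))) (qmult n (fst Qt) (fst (givens Qt k l lam1 lam2)))"
    unfolding Qn by (rule fst_step)
  show ?thesis using J f e by (intro exI[of _ "fst (givens Qt k l lam1 lam2)"]) simp
qed

lemma sim_back:
  assumes U: "qunitary n U" and D: "meq n (qmult n (qadj U) (qmult n A U)) D"
  shows "meq n A (qmult n U (qmult n D (qadj U)))"
  unfolding meq_def
proof (intro allI impI)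
  fix i j assume ij: "i < n" "j < n"
  have m1: "meq n (qmult n D (qadj U)) (qmult n (qmult n (qadj U) (qmult n A U)) (qadj U))"
    using qmult_cong_l[OF D] unfolding meq_def by simp
  have "qmult n U (qmult n D (qadj U)) i j = qmult n U (qmult n (qmult n (qadj U) (qmult n A U)) (qadj U)) i j"
    using m1 by (rule qmult_cong_r[OF _ ij(2)])
  also have "\<dots> = qmult n (qmult n U (qadj U)) (qmult n A (qmult n U (qadj U))) i j"
    by (simp add: qmult_assoc)
  also have "\<dots> = qmult n qident (qmult n A (qmult n U (qadj U))) i j"
    using unitary_right[OF U] ij(1) by (rule qmult_cong_l)
  also have "\<dots> = qmult n A (qmult n U (qadj U)) i j" using ij by (simp add: qident_left)
  also have "\<dots> = qmult n A qident i j" using unitary_right[OF U] by (rule qmult_cong_r[OF _ ij(2)])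
  also have "\<dots> = A i j" using ij by (simp add: qident_right)
  finally show "A i j = qmult n U (qmult n D (qadj U)) i j" by simp
qed

lemma sim_comp:
  assumes A: "meq n A (qmult n W (qmult n D (qadj W)))"
  shows "meq n (qmult n (qadj G) (qmult n A G))
     (qmult n (qmult n (qadj G) W) (qmult n D (qadj (qmult n (qadj G) W))))"
  unfolding meq_def
proof (intro allI impI)
  fix i j assume ij: "i < n" "j < n"
  have m1: "meq n (qmult n A G) (qmult n (qmult n W (qmult n D (qadj W))) G)"
    using qmult_cong_l[OF A] unfolding meq_def by simp
  have "qmult n (qadj G) (qmult n A G) i j = qmult n (qadj G) (qmult n (qmult n W (qmult n D (qadj W))) G) i j"
    using m1 by (rule qmult_cong_r[OF _ ij(2)])
  also have "\<dots> = qmult n (qmult n (qadj G) W) (qmult n D (qadj (qmult n (qadj G) W))) i j"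
    by (simp add: qadj_mult qmult_assoc)
  finally show "qmult n (qadj G) (qmult n A G) i j = qmult n (qmult n (qadj G) W) (qmult n D (qadj (qmult n (qadj G) W))) i j" .
qed

definition dg :: "(nat \<Rightarrow> real) \<Rightarrow> qmat" where
  "dg mu = (\<lambda>i j. if i = j then qreal (mu i) else 0)"

lemma diag_formula:
  assumes "i < n"
  shows "qre (qmult n W (qmult n (dg mu) (qadj W)) i i) = (\<Sum>j<n. (qnorm (W i j))\<^sup>2 * mu j)"
proof -
  have inner: "qmult n (dg mu) (qadj W) m i = qreal (mu m) * qcnj (W i m)" if "m < n" for m
    unfolding qmult_def using that by (subst sum_one[of m]) (auto simp: dg_def qadj_def)
  have "qmult n W (qmult n (dg mu) (qadj W)) i i = (\<Sum>m<n. W i m * (qreal (mu m) * qcnj (W i m)))"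
    unfolding qmult_def[of n W] by (rule sum.cong) (simp_all add: inner)
  thus ?thesis unfolding qnorm_sq' by (simp add: power2_eq_square algebra_simps)
qed

lemma rows_one:
  assumes "qunitary n W" "i < n"
  shows "(\<Sum>j<n. (qnorm (W i j))\<^sup>2) = 1"
proof -
  have "qmult n W (qadj W) i i = 1" using assms unfolding qunitary_def qident_def by auto
  hence "qre (qmult n W (qadj W) i i) = 1" by simp
  thus ?thesis unfolding qmult_def qadj_def quat_sum_simps qnorm_sq .
qed

lemma cols_one:
  assumes "qunitary n W" "j < n"
  shows "(\<Sum>i<n. (qnorm (W i j))\<^sup>2) = 1"
proof -
  have "qmult n (qadj W) W j j = 1" using assms unfolding qunitary_def qident_def by auto
  hence "qre (qmult n (qadj W) W j j) = 1" by simp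
  hence "(\<Sum>i<n. qre (qcnj (W i j) * W i j)) = 1" unfolding qmult_def qadj_def quat_sum_simps .
  thus ?thesis unfolding qnorm_sq by (simp only: qre_comm[of "qcnj _"])
qed

lemma frob_meq: "meq n A B \<Longrightarrow> frob n A = frob n B"
  unfolding frob_def meq_def by simp

lemma frob_dg: "frob n (dg mu) = (\<Sum>i<n. (mu i)\<^sup>2)"
proof -
  have "frob n (dg mu) = (\<Sum>i<n. (qnorm (qreal (mu i)))\<^sup>2)"
    unfolding frob_def
  proof (rule sum.cong)
    fix i assume "i \<in> {..<n}"
    thus "(\<Sum>j<n. (qnorm (dg mu i j))\<^sup>2) = (qnorm (qreal (mu i)))\<^sup>2"
      by (subst sum_one[of i]) (auto simp: dg_def qnorm_def)
  qed simp
  thus ?thesis by (simp add: qnorm_qreal_sq)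
qed

theorem theorem3p6:
  fixes n :: nat and Q :: dqmat and eps :: real
  assumes "n \<ge> 2" and "dhermitian n Q" and "eps > 0"
  shows "\<exists>T0::nat. T0 > 0 \<and>
    (\<forall>Qs. algorithm1_run n eps Q Qs \<longrightarrow>
       (\<exists>T \<le> T0. (\<forall>t<T. off_max n (Qs t) \<ge> eps) \<and> off_max n (Qs T) < eps \<and>
          (\<forall>mu d. qeigenvalue_list n (fst Q) mu \<and> nonincreasing_on n mu \<and>
                  mset (map d [0..<n]) = mset (map (\<lambda>i. qre (fst (Qs T) i i)) [0..<n]) \<and>
                  nonincreasing_on n d
             \<longrightarrow> (\<forall>i<n. \<bar>mu i - d i\<bar> < sqrt (real (n * (n - 1))) * eps))))"
proof -
  note n2 = assms(1) and epos = assms(3)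
  have herm0: "qhermitian n (fst Q)" using assms(2) unfolding dhermitian_def by simp
  define F0 where "F0 = offF n (fst Q)"
  define T0 where "T0 = nat \<lceil>F0 / (2 * eps\<^sup>2)\<rceil> + 1"
  have e2: "eps\<^sup>2 > 0" using epos by simp
  have T0big: "2 * real T0 * eps\<^sup>2 > F0"
  proof -
    have "F0 / (2 * eps\<^sup>2) \<le> real (nat \<lceil>F0 / (2 * eps\<^sup>2)\<rceil>)" by (rule real_nat_ceiling_ge)
    hence "F0 / (2 * eps\<^sup>2) < real T0" unfolding T0_def by simp
    thus ?thesis using e2 by (simp add: divide_less_eq mult.commute mult.left_commute)
  qed
  have main: "\<exists>T \<le> T0. (\<forall>t<T. off_max n (Qs t) \<ge> eps) \<and> off_max n (Qs T) < eps \<and>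
          (\<forall>mu d. qeigenvalue_list n (fst Q) mu \<and> nonincreasing_on n mu \<and>
                  mset (map d [0..<n]) = mset (map (\<lambda>i. qre (fst (Qs T) i i)) [0..<n]) \<and>
                  nonincreasing_on n d
             \<longrightarrow> (\<forall>i<n. \<bar>mu i - d i\<bar> < sqrt (real (n * (n - 1))) * eps))"
    if run: "algorithm1_run n eps Q Qs" for Qs
  proof -
    have Qs0: "Qs 0 = Q" and stepR: "\<And>t. off_max n (Qs t) \<ge> eps \<Longrightarrow> jacobi_step n (Qs t) (Qs (Suc t))"
      using run unfolding algorithm1_run_def by auto
    have stp: "\<exists>G. qunitary n G \<and> fst (Qs (Suc t)) = qmult n (qadj G) (qmult n (fst (Qs t)) G) \<and>
        qhermitian n (fst (Qs (Suc t))) \<and>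
        offF n (fst (Qs (Suc t))) = offF n (fst (Qs t)) - 2 * (off_max n (Qs t))\<^sup>2"
      if "off_max n (Qs t) \<ge> eps" "qhermitian n (fst (Qs t))" for t
      using step_fst[OF stepR[OF that(1)] that(2)] that(1) epos by simp
    have inv: "qhermitian n (fst (Qs t)) \<and> offF n (fst (Qs t)) \<le> F0 - 2 * real t * eps\<^sup>2"
      if "\<forall>t'<t. off_max n (Qs t') \<ge> eps" for t
      using that
    proof (induction t)
      case 0 thus ?case using Qs0 herm0 F0_def by simp
    next
      case (Suc t)
      hence IH: "qhermitian n (fst (Qs t))" "offF n (fst (Qs t)) \<le> F0 - 2 * real t * eps\<^sup>2" by auto
      have ge: "off_max n (Qs t) \<ge> eps" using Suc.prems by simp
      obtain G where G: "qhermitian n (fst (Qs (Suc t)))"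
        "offF n (fst (Qs (Suc t))) = offF n (fst (Qs t)) - 2 * (off_max n (Qs t))\<^sup>2"
        using stp[OF ge IH(1)] by blast
      have "eps\<^sup>2 \<le> (off_max n (Qs t))\<^sup>2" using ge epos by (simp add: power_mono)
      moreover have "F0 - 2 * real (Suc t) * eps\<^sup>2 = F0 - 2 * real t * eps\<^sup>2 - 2 * eps\<^sup>2"
        by (simp add: algebra_simps)
      ultimately show ?case using G IH by linarith
    qed
    have ex: "\<exists>t. off_max n (Qs t) < eps \<and> t \<le> T0"
    proof (rule ccontr)
      assume "\<not> ?thesis"
      hence "\<forall>t'<T0. off_max n (Qs t') \<ge> eps" by (meson less_imp_le not_less)
      hence "offF n (fst (Qs T0)) \<le> F0 - 2 * real T0 * eps\<^sup>2" using inv by blast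
      thus False using T0big offF_nonneg[of n "fst (Qs T0)"] by linarith
    qed
    define T where "T = (LEAST t. off_max n (Qs t) < eps)"
    obtain t0 where t0: "off_max n (Qs t0) < eps" "t0 \<le> T0" using ex by blast
    have TT0: "T \<le> T0" unfolding T_def using Least_le[of "\<lambda>t. off_max n (Qs t) < eps" t0] t0 by simp
    have offT: "off_max n (Qs T) < eps" unfolding T_def using t0(1) by (rule LeastI)
    have before: "\<forall>t<T. off_max n (Qs t) \<ge> eps"
      unfolding T_def using not_less_Least by force
    have hermT: "qhermitian n (fst (Qs T))" using inv before by blast
    have offlt: "offF n (fst (Qs T)) < real (n * (n - 1)) * eps\<^sup>2" using offF_lt[OF hermT n2 offT] .
    have eig: "\<forall>i<n. \<bar>mu i - d i\<bar> < sqrt (real (n * (n - 1))) * eps"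
      if H: "qeigenvalue_list n (fst Q) mu" "nonincreasing_on n mu"
        "mset (map d [0..<n]) = mset (map (\<lambda>i. qre (fst (Qs T) i i)) [0..<n])"
        "nonincreasing_on n d" for mu d
    proof -
      obtain U where U: "qunitary n U"
        "\<forall>i<n. \<forall>j<n. qmult n (qadj U) (qmult n (fst Q) U) i j = (if i = j then qreal (mu i) else 0)"
        using H(1) unfolding qeigenvalue_list_def by blast
      have UD: "meq n (qmult n (qadj U) (qmult n (fst Q) U)) (dg mu)"
        using U(2) unfolding meq_def dg_def by simp
      have invW: "\<exists>W. qunitary n W \<and> meq n (fst (Qs t)) (qmult n W (qmult n (dg mu) (qadj W)))"
        if "\<forall>t'<t. off_max n (Qs t') \<ge> eps" for t
        using that
      proof (induction t)
        case 0 thus ?case using Qs0 sim_back[OF U(1) UD] U(1) by auto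
      next
        case (Suc t)
        then obtain W where W: "qunitary n W" "meq n (fst (Qs t)) (qmult n W (qmult n (dg mu) (qadj W)))"
          by auto
        have ge: "off_max n (Qs t) \<ge> eps" using Suc.prems by simp
        have ht: "qhermitian n (fst (Qs t))" using inv Suc.prems by simp
        obtain G where G: "qunitary n G" "fst (Qs (Suc t)) = qmult n (qadj G) (qmult n (fst (Qs t)) G)"
          using stp[OF ge ht] by blast
        show ?case
          using G unitary_mult[OF unitary_adj[OF G(1)] W(1)] sim_comp[OF W(2), of G]
          by (intro exI[of _ "qmult n (qadj G) W"]) simp
      qed
      obtain W where W: "qunitary n W" "meq n (fst (Qs T)) (qmult n W (qmult n (dg mu) (qadj W)))"
        using invW before by blast
      define A where "A = fst (Qs T)"
      have diag: "qre (A i i) = (\<Sum>j<n. (qnorm (W i j))\<^sup>2 * mu j)" if "i < n" for i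
        using W(2) that diag_formula[OF that, of W mu] unfolding A_def meq_def by simp
      have frA: "frob n A = (\<Sum>i<n. (mu i)\<^sup>2)"
      proof -
        have "frob n A = frob n (qmult n W (qmult n (dg mu) (qadj W)))"
          unfolding A_def using W(2) by (rule frob_meq)
        also have "\<dots> = frob n (qmult n (qadj (qadj W)) (qmult n (dg mu) (qadj W)))" by simp
        also have "\<dots> = frob n (dg mu)" by (rule frob_sim[OF unitary_adj[OF W(1)]])
        finally show ?thesis using frob_dg by simp
      qed
      have split: "frob n A = offF n A + (\<Sum>i<n. (qre (A i i))\<^sup>2)"
        using frob_split_herm[OF hermT] unfolding A_def .
      have "map d [0..<n] <~~> map (\<lambda>i. qre (A i i)) [0..<n]" using H(3) unfolding A_def by simp
      from permutation_Ex_bij[OF this] obtain f where f1: "bij_betw f {..<n} {..<n}"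
        and f2: "\<forall>i<n. map d [0..<n] ! i = map (\<lambda>i. qre (A i i)) [0..<n] ! f i" by auto
      have fi: "f i < n" if "i < n" for i using f1 that by (auto dest: bij_betw_apply)
      have f: "bij_betw f {..<n} {..<n}" "\<forall>i<n. d i = qre (A (f i) (f i))"
        using f1 f2 fi by auto
      define P where "P i j = (qnorm (W (f i) j))\<^sup>2" for i j
      have Pnn: "P i j \<ge> 0" for i j unfolding P_def by simp
      have rows: "(\<Sum>j<n. P i j) = 1" if "i < n" for i
        unfolding P_def using rows_one[OF W(1) fi[OF that]] .
      have cols: "(\<Sum>i<n. P i j) = 1" if "j < n" for j
      proof -
        have "(\<Sum>i<n. P i j) = (\<Sum>i<n. (qnorm (W i j))\<^sup>2)"
          unfolding P_def using sum.reindex_bij_betw[OF f(1), of "\<lambda>i. (qnorm (W i j))\<^sup>2"] by simp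
        thus ?thesis using cols_one[OF W(1) that] by simp
      qed
      have dP: "d i = (\<Sum>j<n. P i j * mu j)" if "i < n" for i
        using f(2) that diag[OF fi[OF that]] unfolding P_def by simp
      have dsq: "(\<Sum>i<n. (d i)\<^sup>2) = (\<Sum>i<n. (qre (A i i))\<^sup>2)"
        using f(2) sum.reindex_bij_betw[OF f(1), of "\<lambda>i. (qre (A i i))\<^sup>2"] by simp
      have maj: "(\<Sum>i<n. (mu i - d i)\<^sup>2) \<le> (\<Sum>i<n. (mu i)\<^sup>2) - (\<Sum>i<n. (d i)\<^sup>2)"
        using majorization[of n P mu d] Pnn rows cols H(2) H(4) dP by blast
      have tot: "(\<Sum>i<n. (mu i - d i)\<^sup>2) < real (n * (n - 1)) * eps\<^sup>2"
        using maj dsq split frA offlt unfolding A_def by linarith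
      show ?thesis
      proof (intro allI impI)
        fix i assume i: "i < n"
        have "(mu i - d i)\<^sup>2 \<le> (\<Sum>i<n. (mu i - d i)\<^sup>2)"
          using i by (intro member_le_sum) auto
        hence lt: "\<bar>mu i - d i\<bar>\<^sup>2 < real (n * (n - 1)) * eps\<^sup>2" using tot by simp
        have "\<bar>mu i - d i\<bar> = sqrt (\<bar>mu i - d i\<bar>\<^sup>2)" by simp
        also have "\<dots> < sqrt (real (n * (n - 1)) * eps\<^sup>2)" using lt by (rule real_sqrt_less_mono)
        also have "\<dots> = sqrt (real (n * (n - 1))) * eps" using epos by (simp add: real_sqrt_mult)
        finally show "\<bar>mu i - d i\<bar> < sqrt (real (n * (n - 1))) * eps" .
      qed
    qed
    show ?thesis using TT0 before offT eig by blast
  qed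
  show ?thesis by (intro exI[of _ T0]) (use main T0_def in auto)
qed

end
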